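(* Let $F_1$ be the disjoint union of $S_0$ and $S_{2,1^2}$. Then $\mathrm{HDE}(F_1;S_{2,1^0})=2$; consequently, for every graph $G$, $\hom(S_0;G)\cdot\hom(S_{2,1^2};G)\ge\hom(S_{2,1^0};G)^2$.
   Context: All graphs are finite; $\hom(H;G)$ is the number of graph homomorphisms from $H$ to $G$ (so $\hom$ of a disjoint union is the product of the $\hom$'s of the components). $S_0$ is a single vertex; for $k\ge0$, $S_{2,1^k}$ is the tree with vertex set $\{1,\ldots,k+3\}$ and edge set $\{\{1,j\}:2\le j\le k+2\}\cup\{\{k+2,k+3\}\}$. The homomorphism domination exponent $\mathrm{HDE}(F_1;F_2)$ of graphs $F_1,F_2$ is the maximum real $c$ such that $\hom(F_1;G)\ge\hom(F_2;G)^c$ for every graph $G$. *)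

theory Defs
  imports Complex_Main "HOL-Library.FuncSet"
begin

type_synonym 'a graph = "'a set \<times> ('a \<Rightarrow> 'a \<Rightarrow> bool)"

definition verts :: "'a graph \<Rightarrow> 'a set" where "verts G = fst G"
definition adj :: "'a graph \<Rightarrow> 'a \<Rightarrow> 'a \<Rightarrow> bool" where "adj G = snd G"

definition is_graph :: "'a graph \<Rightarrow> bool" where
  "is_graph G \<longleftrightarrow> finite (verts G)
     \<and> (\<forall>u v. adj G u v \<longrightarrow> u \<in> verts G \<and> v \<in> verts G)
     \<and> (\<forall>u v. adj G u v \<longrightarrow> adj G v u)
     \<and> (\<forall>u. \<not> adj G u u)"

definition homs :: "'a graph \<Rightarrow> 'b graph \<Rightarrow> ('a \<Rightarrow> 'b) set" where
  "homs H G = {f \<in> verts H \<rightarrow>\<^sub>E verts G.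
                 \<forall>u v. adj H u v \<longrightarrow> adj G (f u) (f v)}"

definition hom :: "'a graph \<Rightarrow> 'b graph \<Rightarrow> nat" where
  "hom H G = card (homs H G)"

definition disj_union :: "'a graph \<Rightarrow> 'b graph \<Rightarrow> ('a + 'b) graph" where
  "disj_union H K = (Inl ` verts H \<union> Inr ` verts K,
     (\<lambda>x y. case (x, y) of (Inl a, Inl b) \<Rightarrow> adj H a b
                        | (Inr a, Inr b) \<Rightarrow> adj K a b
                        | _ \<Rightarrow> False))"

definition S0 :: "nat graph" where
  "S0 = ({1}, \<lambda>_ _. False)"

definition S21 :: "nat \<Rightarrow> nat graph" where
  "S21 k = ({1..k+3},
     (\<lambda>u v. (u = 1 \<and> 2 \<le> v \<and> v \<le> k+2) \<or> (v = 1 \<and> 2 \<le> u \<and> u \<le> k+2)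
          \<or> (u = k+2 \<and> v = k+3) \<or> (u = k+3 \<and> v = k+2)))"

text \<open>Homomorphism domination exponent: the maximum real c with
  hom(F1;G) \<ge> hom(F2;G)^c for all graphs G (graphs taken up to isomorphism,
  i.e. on vertex type nat).\<close>
definition HDE :: "'a graph \<Rightarrow> 'b graph \<Rightarrow> real" where
  "HDE F1 F2 = (GREATEST c::real. \<forall>G :: nat graph. is_graph G \<longrightarrow>
                   real (hom F2 G) powr c \<le> real (hom F1 G))"

end

theory Submission
  imports Defs
begin

lemma cs_weighted:
  fixes x y :: "'i \<Rightarrow> real"
  assumes "finite S" "\<forall>i\<in>S. y i > 0"
  shows "(\<Sum>i\<in>S. x i)^2 \<le> (\<Sum>i\<in>S. x i^2 * y i) * (\<Sum>i\<in>S. 1 / y i)"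
proof -
  have pt: "2 * (x i * x j) \<le> x i^2 * y i / y j + x j^2 * y j / y i" if "i \<in> S" "j \<in> S" for i j
  proof -
    have yi: "y i > 0" and yj: "y j > 0" using assms that by auto
    have "0 \<le> (x i * y i - x j * y j)^2 / (y i * y j)" using yi yj by simp
    also have "\<dots> = x i^2 * y i / y j + x j^2 * y j / y i - 2 * (x i * x j)"
      using yi yj by (simp add: field_simps power2_eq_square)
    finally show ?thesis by simp
  qed
  have sq: "(\<Sum>i\<in>S. x i)^2 = (\<Sum>i\<in>S. \<Sum>j\<in>S. x i * x j)"
    by (simp add: power2_eq_square sum_product)
  have "2 * (\<Sum>i\<in>S. x i)^2 = (\<Sum>i\<in>S. \<Sum>j\<in>S. 2 * (x i * x j))"
    unfolding sq by (simp add: sum_distrib_left)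
  also have "\<dots> \<le> (\<Sum>i\<in>S. \<Sum>j\<in>S. x i^2 * y i / y j + x j^2 * y j / y i)"
    by (intro sum_mono pt)
  also have "\<dots> = (\<Sum>i\<in>S. \<Sum>j\<in>S. x i^2 * y i / y j) + (\<Sum>i\<in>S. \<Sum>j\<in>S. x j^2 * y j / y i)"
    by (simp add: sum.distrib)
  also have "(\<Sum>i\<in>S. \<Sum>j\<in>S. x j^2 * y j / y i) = (\<Sum>i\<in>S. \<Sum>j\<in>S. x i^2 * y i / y j)"
    by (rule sum.swap)
  also have "(\<Sum>i\<in>S. \<Sum>j\<in>S. x i^2 * y i / y j) = (\<Sum>i\<in>S. x i^2 * y i) * (\<Sum>i\<in>S. 1 / y i)"
    by (simp add: sum_product divide_inverse)
  finally show ?thesis by (simp add: mult.commute)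
qed

definition NB :: "'a graph \<Rightarrow> 'a \<Rightarrow> 'a set" where "NB G v = {w \<in> verts G. adj G v w}"
definition dg :: "'a graph \<Rightarrow> 'a \<Rightarrow> nat" where "dg G v = card (NB G v)"
definition DD :: "'a graph \<Rightarrow> ('a \<times> 'a) set" where "DD G = Sigma (verts G) (NB G)"

lemma fin_NB: "is_graph G \<Longrightarrow> finite (NB G v)"
  by (simp add: is_graph_def NB_def)
lemma fin_DD: "is_graph G \<Longrightarrow> finite (DD G)"
  by (simp add: DD_def fin_NB is_graph_def)
lemma DD_iff: "is_graph G \<Longrightarrow> (u,w) \<in> DD G \<longleftrightarrow> adj G u w"
  by (auto simp: DD_def NB_def is_graph_def)

lemma homs_iff: "f \<in> homs H G \<longleftrightarrow> f \<in> verts H \<rightarrow>\<^sub>E verts G \<and> (\<forall>u v. adj H u v \<longrightarrow> adj G (f u) (f v))"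
  by (simp add: homs_def)

lemma verts_S21: "verts (S21 k) = {1..k+3}" by (simp add: verts_def S21_def)
lemma adj_S21: "adj (S21 k) u v \<longleftrightarrow> (u = 1 \<and> 2 \<le> v \<and> v \<le> k+2) \<or> (v = 1 \<and> 2 \<le> u \<and> u \<le> k+2)
          \<or> (u = k+2 \<and> v = k+3) \<or> (u = k+3 \<and> v = k+2)" by (simp add: adj_def S21_def)

definition B2 :: "'a graph \<Rightarrow> 'a \<times> 'a \<Rightarrow> nat \<Rightarrow> 'a set" where
  "B2 G p i = (if i = 1 then {fst p} else if i = 4 then {snd p} else if i = 5 then NB G (snd p) else NB G (fst p))"

lemma five: "{1..5::nat} = {1,2,3,4,5}" by auto
lemma three: "{1..3::nat} = {1,2,3}" by auto

lemma homs_S21_2: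
  assumes G: "is_graph G"
  shows "homs (S21 2) G = (\<Union>p\<in>DD G. PiE {1..5} (B2 G p))"
proof (intro equalityI subsetI)
  fix f assume "f \<in> homs (S21 2) G"
  then have f: "f \<in> {1..5} \<rightarrow>\<^sub>E verts G" and a: "\<And>u v. adj (S21 2) u v \<Longrightarrow> adj G (f u) (f v)"
    by (auto simp: homs_iff verts_S21)
  have "adj G (f 1) (f 4)" by (rule a) (simp add: adj_S21)
  then have "(f 1, f 4) \<in> DD G" using G by (simp add: DD_iff)
  moreover have "f \<in> PiE {1..5} (B2 G (f 1, f 4))"
  proof -
    have "adj G (f 1) (f 2)" "adj G (f 1) (f 3)" "adj G (f 4) (f 5)" by (rule a, simp add: adj_S21)+
    then show ?thesis using f G unfolding five B2_def NB_def is_graph_def by (auto simp: PiE_iff)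
  qed
  ultimately show "f \<in> (\<Union>p\<in>DD G. PiE {1..5} (B2 G p))" by blast
next
  fix f assume "f \<in> (\<Union>p\<in>DD G. PiE {1..5} (B2 G p))"
  then obtain u w where uw: "(u,w) \<in> DD G" and f: "f \<in> PiE {1..5} (B2 G (u,w))" by auto
  have uw': "adj G u w" "u \<in> verts G" "w \<in> verts G" using uw G by (auto simp: DD_iff DD_def NB_def)
  have fv: "f 1 = u" "f 4 = w" "f 2 \<in> NB G u" "f 3 \<in> NB G u" "f 5 \<in> NB G w"
    using f unfolding five B2_def by (auto simp: PiE_iff)
  have sym: "\<And>a b. adj G a b \<Longrightarrow> adj G b a" using G by (simp add: is_graph_def)
  have e: "adj G (f 1) (f 2)" "adj G (f 1) (f 3)" "adj G (f 1) (f 4)" "adj G (f 4) (f 5)"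
    using fv uw' by (auto simp: NB_def)
  have "f \<in> {1..5} \<rightarrow>\<^sub>E verts G" using f fv uw' unfolding five B2_def by (auto simp: PiE_iff NB_def)
  moreover have "adj G (f a) (f b)" if "adj (S21 2) a b" for a b
  proof -
    from that have "(a = 1 \<and> (b = 2 \<or> b = 3 \<or> b = 4)) \<or> (b = 1 \<and> (a = 2 \<or> a = 3 \<or> a = 4)) \<or> (a = 4 \<and> b = 5) \<or> (a = 5 \<and> b = 4)"
      unfolding adj_S21 by auto
    then show ?thesis using e sym by auto
  qed
  ultimately show "f \<in> homs (S21 2) G" by (simp add: homs_iff verts_S21)
qed

lemma hom_S21_2:
  assumes G: "is_graph G"
  shows "hom (S21 2) G = (\<Sum>p\<in>DD G. dg G (fst p)^2 * dg G (snd p))"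
proof -
  have "hom (S21 2) G = card (\<Union>p\<in>DD G. PiE {1..5} (B2 G p))"
    by (simp add: hom_def homs_S21_2[OF G])
  also have "\<dots> = (\<Sum>p\<in>DD G. card (PiE {1..5} (B2 G p)))"
  proof (rule card_UN_disjoint)
    show "finite (DD G)" using G by (rule fin_DD)
    show "\<forall>p\<in>DD G. finite (PiE {1..5} (B2 G p))"
      using G by (auto intro!: finite_PiE simp: B2_def fin_NB)
    show "\<forall>p\<in>DD G. \<forall>q\<in>DD G. p \<noteq> q \<longrightarrow> PiE {1..5} (B2 G p) \<inter> PiE {1..5} (B2 G q) = {}"
    proof (intro ballI impI)
      fix p q :: "'a \<times> 'a" assume "p \<noteq> q"
      show "PiE {1..5} (B2 G p) \<inter> PiE {1..5} (B2 G q) = {}"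
      proof (rule ccontr)
        assume "PiE {1..5} (B2 G p) \<inter> PiE {1..5} (B2 G q) \<noteq> {}"
        then obtain f where fp: "f \<in> PiE {1..5} (B2 G p)" and fq: "f \<in> PiE {1..5} (B2 G q)" by blast
        have "f 1 \<in> B2 G p 1" "f 1 \<in> B2 G q 1" "f 4 \<in> B2 G p 4" "f 4 \<in> B2 G q 4"
          using PiE_mem[OF fp] PiE_mem[OF fq] by simp_all
        then have "f 1 \<in> {fst p}" "f 1 \<in> {fst q}" "f 4 \<in> {snd p}" "f 4 \<in> {snd q}"
          unfolding B2_def by simp_all
        then show False using \<open>p \<noteq> q\<close> by (auto simp: prod_eq_iff)
      qed
    qed
  qed
  also have "\<dots> = (\<Sum>p\<in>DD G. dg G (fst p)^2 * dg G (snd p))"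
    unfolding five by (intro sum.cong refl) (simp add: card_PiE B2_def dg_def power2_eq_square)
  finally show ?thesis .
qed

definition B0 :: "'a graph \<Rightarrow> 'a \<times> 'a \<Rightarrow> nat \<Rightarrow> 'a set" where
  "B0 G p i = (if i = 2 then {fst p} else if i = 3 then {snd p} else NB G (fst p))"

lemma homs_S21_0:
  assumes G: "is_graph G"
  shows "homs (S21 0) G = (\<Union>p\<in>DD G. PiE {1..3} (B0 G p))"
proof (intro equalityI subsetI)
  fix f assume "f \<in> homs (S21 0) G"
  then have f: "f \<in> {1..3} \<rightarrow>\<^sub>E verts G" and a: "\<And>u v. adj (S21 0) u v \<Longrightarrow> adj G (f u) (f v)"
    by (auto simp: homs_iff verts_S21)
  have "adj G (f 2) (f 3)" by (rule a) (simp add: adj_S21)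
  then have "(f 2, f 3) \<in> DD G" using G by (simp add: DD_iff)
  moreover have "f \<in> PiE {1..3} (B0 G (f 2, f 3))"
  proof -
    have "adj G (f 2) (f 1)" by (rule a, simp add: adj_S21)
    then show ?thesis using f G unfolding three B0_def NB_def is_graph_def by (auto simp: PiE_iff)
  qed
  ultimately show "f \<in> (\<Union>p\<in>DD G. PiE {1..3} (B0 G p))" by blast
next
  fix f assume "f \<in> (\<Union>p\<in>DD G. PiE {1..3} (B0 G p))"
  then obtain u w where uw: "(u,w) \<in> DD G" and f: "f \<in> PiE {1..3} (B0 G (u,w))" by auto
  have uw': "adj G u w" "u \<in> verts G" "w \<in> verts G" using uw G by (auto simp: DD_iff DD_def NB_def)
  have fv: "f 2 = u" "f 3 = w" "f 1 \<in> NB G u"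
    using f unfolding three B0_def by (auto simp: PiE_iff)
  have sym: "\<And>a b. adj G a b \<Longrightarrow> adj G b a" using G by (simp add: is_graph_def)
  have e: "adj G (f 1) (f 2)" "adj G (f 2) (f 3)"
    using fv uw' sym by (auto simp: NB_def)
  have "f \<in> {1..3} \<rightarrow>\<^sub>E verts G" using f fv uw' unfolding three B0_def by (auto simp: PiE_iff NB_def)
  moreover have "adj G (f a) (f b)" if "adj (S21 0) a b" for a b
  proof -
    from that have "(a = 1 \<and> b = 2) \<or> (b = 1 \<and> a = 2) \<or> (a = 2 \<and> b = 3) \<or> (a = 3 \<and> b = 2)"
      unfolding adj_S21 by auto
    then show ?thesis using e sym by auto
  qed
  ultimately show "f \<in> homs (S21 0) G" by (simp add: homs_iff verts_S21)
qed

lemma hom_S21_0: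
  assumes G: "is_graph G"
  shows "hom (S21 0) G = (\<Sum>p\<in>DD G. dg G (fst p))"
proof -
  have "hom (S21 0) G = card (\<Union>p\<in>DD G. PiE {1..3} (B0 G p))"
    by (simp add: hom_def homs_S21_0[OF G])
  also have "\<dots> = (\<Sum>p\<in>DD G. card (PiE {1..3} (B0 G p)))"
  proof (rule card_UN_disjoint)
    show "finite (DD G)" using G by (rule fin_DD)
    show "\<forall>p\<in>DD G. finite (PiE {1..3} (B0 G p))"
      using G by (auto intro!: finite_PiE simp: B0_def fin_NB)
    show "\<forall>p\<in>DD G. \<forall>q\<in>DD G. p \<noteq> q \<longrightarrow> PiE {1..3} (B0 G p) \<inter> PiE {1..3} (B0 G q) = {}"
    proof (intro ballI impI)
      fix p q :: "'a \<times> 'a" assume "p \<noteq> q"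
      show "PiE {1..3} (B0 G p) \<inter> PiE {1..3} (B0 G q) = {}"
      proof (rule ccontr)
        assume "PiE {1..3} (B0 G p) \<inter> PiE {1..3} (B0 G q) \<noteq> {}"
        then obtain f where fp: "f \<in> PiE {1..3} (B0 G p)" and fq: "f \<in> PiE {1..3} (B0 G q)" by blast
        have "f 2 \<in> B0 G p 2" "f 2 \<in> B0 G q 2" "f 3 \<in> B0 G p 3" "f 3 \<in> B0 G q 3"
          using PiE_mem[OF fp] PiE_mem[OF fq] by simp_all
        then have "f 2 \<in> {fst p}" "f 2 \<in> {fst q}" "f 3 \<in> {snd p}" "f 3 \<in> {snd q}"
          unfolding B0_def by simp_all
        then show False using \<open>p \<noteq> q\<close> by (auto simp: prod_eq_iff)
      qed
    qed
  qed
  also have "\<dots> = (\<Sum>p\<in>DD G. dg G (fst p))"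
    unfolding three by (intro sum.cong refl) (simp add: card_PiE B0_def dg_def)
  finally show ?thesis .
qed

lemma hom_S0: "hom S0 G = card (verts G)"
proof -
  have "homs S0 G = {1} \<rightarrow>\<^sub>E verts G" by (auto simp: homs_def S0_def verts_def adj_def)
  then show ?thesis by (simp add: hom_def card_PiE)
qed

lemma hom_disj: "hom (disj_union H K) G = hom H G * hom K G"
proof -
  let ?g = "\<lambda>f. (\<lambda>a. f (Inl a), \<lambda>b. f (Inr b))"
  let ?h = "\<lambda>p. case_sum (fst p) (snd p)"
  have vd: "verts (disj_union H K) = Inl ` verts H \<union> Inr ` verts K"
    by (simp add: disj_union_def verts_def)
  have ad1: "adj (disj_union H K) (Inl a) (Inl b) = adj H a b" for a b
    by (simp add: disj_union_def adj_def)
  have ad2: "adj (disj_union H K) (Inr a) (Inr b) = adj K a b" for a b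
    by (simp add: disj_union_def adj_def)
  have ad3: "\<not> adj (disj_union H K) (Inl a) (Inr b)" "\<not> adj (disj_union H K) (Inr b) (Inl a)" for a b
    by (simp_all add: disj_union_def adj_def)
  have "bij_betw ?g (homs (disj_union H K) G) (homs H G \<times> homs K G)"
  proof (rule bij_betw_byWitness[where f'="?h"])
    show "\<forall>f\<in>homs (disj_union H K) G. ?h (?g f) = f"
      by (auto simp: fun_eq_iff split: sum.split)
    show "\<forall>p\<in>homs H G \<times> homs K G. ?g (?h p) = p" by auto
    show "?g ` homs (disj_union H K) G \<subseteq> homs H G \<times> homs K G"
    proof
      fix x assume "x \<in> ?g ` homs (disj_union H K) G"
      then obtain f where f: "f \<in> homs (disj_union H K) G" and x: "x = ?g f" by auto
      from f have f1: "f \<in> verts (disj_union H K) \<rightarrow>\<^sub>E verts G"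
        and f2: "\<And>u v. adj (disj_union H K) u v \<Longrightarrow> adj G (f u) (f v)" by (auto simp: homs_iff)
      have "(\<lambda>a. f (Inl a)) \<in> homs H G"
        unfolding homs_iff using f1 f2[of "Inl _" "Inl _"] by (auto simp: vd ad1 PiE_iff extensional_def intro!: PiE_arb[OF f1])
      moreover have "(\<lambda>a. f (Inr a)) \<in> homs K G"
        unfolding homs_iff using f1 f2[of "Inr _" "Inr _"] by (auto simp: vd ad2 PiE_iff extensional_def intro!: PiE_arb[OF f1])
      ultimately show "x \<in> homs H G \<times> homs K G" using x by simp
    qed
    show "?h ` (homs H G \<times> homs K G) \<subseteq> homs (disj_union H K) G"
    proof
      fix x assume "x \<in> ?h ` (homs H G \<times> homs K G)"
      then obtain g1 g2 where g1: "g1 \<in> homs H G" and g2: "g2 \<in> homs K G" and x: "x = case_sum g1 g2" by auto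
      have "x \<in> verts (disj_union H K) \<rightarrow>\<^sub>E verts G"
        using g1 g2 unfolding x vd by (auto simp: homs_iff PiE_iff extensional_def split: sum.split)
      moreover have "adj G (x u) (x v)" if "adj (disj_union H K) u v" for u v
        using that g1 g2 unfolding x
        by (cases u; cases v) (auto simp: homs_iff ad1 ad2 ad3)
      ultimately show "x \<in> homs (disj_union H K) G" by (simp add: homs_iff)
    qed
  qed
  then show ?thesis by (simp add: hom_def bij_betw_same_card card_cartesian_product)
qed

lemma main_ineq:
  assumes G: "is_graph G"
  shows "hom (S21 0) G ^ 2 \<le> hom S0 G * hom (S21 2) G"
proof -
  have finD: "finite (DD G)" using G by (rule fin_DD)
  have sym: "\<And>a b. adj G a b \<Longrightarrow> adj G b a" using G by (simp add: is_graph_def)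
  have pos: "\<forall>p\<in>DD G. real (dg G (snd p)) > 0"
  proof
    fix p assume p: "p \<in> DD G"
    obtain u w where pe: "p = (u,w)" by force
    have "adj G u w" using p pe G by (simp add: DD_iff)
    then have "u \<in> NB G w" using G sym by (auto simp: NB_def is_graph_def)
    then have "NB G w \<noteq> {}" by auto
    then show "real (dg G (snd p)) > 0" using fin_NB[OF G] pe by (simp add: dg_def card_gt_0_iff)
  qed
  have swapb: "bij_betw prod.swap (DD G) (DD G)"
    by (rule bij_betw_byWitness[where f'=prod.swap]) (auto simp: DD_iff[OF G] sym)
  have "(\<Sum>p\<in>DD G. 1 / real (dg G (snd p))) = (\<Sum>p\<in>DD G. 1 / real (dg G (fst (prod.swap p))))"
    by simp
  also have "\<dots> = (\<Sum>p\<in>DD G. 1 / real (dg G (fst p)))"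
    by (rule sum.reindex_bij_betw[OF swapb])
  also have "\<dots> = (\<Sum>u\<in>verts G. \<Sum>w\<in>NB G u. 1 / real (dg G u))"
    unfolding DD_def using G fin_NB[OF G] by (subst sum.Sigma) (auto simp: is_graph_def split_def)
  also have "\<dots> \<le> (\<Sum>u\<in>verts G. 1)"
    by (intro sum_mono) (simp add: dg_def)
  finally have S: "(\<Sum>p\<in>DD G. 1 / real (dg G (snd p))) \<le> real (card (verts G))" by simp
  have "real (hom (S21 0) G ^ 2) = (\<Sum>p\<in>DD G. real (dg G (fst p)))^2"
    by (simp add: hom_S21_0[OF G])
  also have "\<dots> \<le> (\<Sum>p\<in>DD G. real (dg G (fst p))^2 * real (dg G (snd p))) * (\<Sum>p\<in>DD G. 1 / real (dg G (snd p)))"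
    by (rule cs_weighted[OF finD pos])
  also have "\<dots> \<le> (\<Sum>p\<in>DD G. real (dg G (fst p))^2 * real (dg G (snd p))) * real (card (verts G))"
    by (intro mult_left_mono S sum_nonneg) auto
  also have "\<dots> = real (hom S0 G * hom (S21 2) G)"
    by (simp add: hom_S0 hom_S21_2[OF G])
  finally show ?thesis by linarith
qed

definition K2 :: "nat graph" where "K2 = ({0,1}, \<lambda>u v. u \<noteq> v \<and> u \<in> {0,1} \<and> v \<in> {0,1})"

lemma K2_graph: "is_graph K2" by (auto simp: is_graph_def K2_def verts_def adj_def)

lemma K2_vals: "hom (S21 0) K2 = 2" "hom S0 K2 = 2" "hom (S21 2) K2 = 2"
proof -
  have D: "DD K2 = {(0,1),(1,0)}" by (auto simp: DD_def NB_def K2_def verts_def adj_def)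
  have N: "NB K2 0 = {1}" "NB K2 1 = {0}" "NB K2 (Suc 0) = {0}" by (auto simp: NB_def K2_def verts_def adj_def)
  show "hom (S21 0) K2 = 2" by (simp add: hom_S21_0[OF K2_graph] D dg_def N)
  show "hom (S21 2) K2 = 2" by (simp add: hom_S21_2[OF K2_graph] D dg_def N)
  show "hom S0 K2 = 2" by (simp add: hom_S0 K2_def verts_def)
qed

theorem theorem3p6:
  shows "HDE (disj_union S0 (S21 2)) (S21 0) = 2
    \<and> (\<forall>G :: nat graph. is_graph G \<longrightarrow>
          hom S0 G * hom (S21 2) G \<ge> hom (S21 0) G ^ 2)"
proof
  show "HDE (disj_union S0 (S21 2)) (S21 0) = 2"
    unfolding HDE_def
  proof (rule Greatest_equality)
    show "\<forall>G :: nat graph. is_graph G \<longrightarrow>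
         real (hom (S21 0) G) powr (2::real) \<le> real (hom (disj_union S0 (S21 2)) G)"
    proof (intro allI impI)
      fix G :: "nat graph" assume G: "is_graph G"
      have "real (hom (S21 0) G) powr (2::real) = real (hom (S21 0) G ^ 2)" by simp
      also have "\<dots> \<le> real (hom S0 G * hom (S21 2) G)" using main_ineq[OF G] by linarith
      finally show "real (hom (S21 0) G) powr (2::real) \<le> real (hom (disj_union S0 (S21 2)) G)"
        by (simp add: hom_disj)
    qed
  next
    fix c :: real
    assume "\<forall>G :: nat graph. is_graph G \<longrightarrow> real (hom (S21 0) G) powr c \<le> real (hom (disj_union S0 (S21 2)) G)"
    then have "real (hom (S21 0) K2) powr c \<le> real (hom (disj_union S0 (S21 2)) K2)"
      using K2_graph by blast
    then have "(2::real) powr c \<le> 2 powr (2::real)" by (simp add: hom_disj K2_vals)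
    then show "c \<le> 2" using powr_le_cancel_iff[of "2::real" c 2] by simp
  qed
  show "\<forall>G :: nat graph. is_graph G \<longrightarrow> hom S0 G * hom (S21 2) G \<ge> hom (S21 0) G ^ 2"
    using main_ineq by blast
qed

end
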